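(* Let $p$ be a propositional variable. The formula $\neg\neg\Box p\to\Box\neg\neg p$ is derivable in $\mathsf{CK}\oplus\mathsf{N}_\Diamond\oplus\mathsf{I}_{\Diamond\Box}$ but not in $\mathsf{CK}\oplus\mathsf{N}_{\Diamond\Box}\oplus\mathsf{C}_\Diamond\oplus\mathsf{I}_{\Diamond\Box}$ (and hence not in $\mathsf{CK}\oplus\mathsf{N}_{\Diamond\Box}\oplus\mathsf{I}_{\Diamond\Box}$).
   Context: Formulas: $\mathbf{L}$ is generated from a countably infinite set of propositional variables by $\varphi ::= p \mid \bot \mid \varphi\wedge\varphi \mid \varphi\vee\varphi \mid \varphi\to\varphi \mid \Box\varphi \mid \Diamond\varphi$; $\neg\varphi:=\varphi\to\bot$. Axioms: $\mathsf{K}_\Box$: $\Box(\varphi\to\psi)\to(\Box\varphi\to\Box\psi)$; $\mathsf{K}_\Diamond$: $\Box(\varphi\to\psi)\to(\Diamond\varphi\to\Diamond\psi)$; $\mathsf{N}_\Diamond$: $\Diamond\bot\to\bot$; $\mathsf{N}_{\Diamond\Box}$: $\Diamond\bot\to\Box\bot$; $\mathsf{C}_\Diamond$: $\Diamond(\varphi\vee\psi)\to\Diamond\varphi\vee\Diamond\psi$; $\mathsf{I}_{\Diamond\Box}$: $(\Diamond\varphi\to\Box\psi)\to\Box(\varphi\to\psi)$. For a set $\mathsf{Ax}$ of axioms, $\mathsf{CK}\oplus\mathsf{Ax}$ is the relation $\Gamma\vdash_{\mathsf{Ax}}\varphi$ inductively generated by: (Ax) $\Gamma\vdash\varphi$ whenever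 $\varphi$ is a substitution instance of an axiom of a standard Hilbert axiomatisation of intuitionistic propositional logic, of $\mathsf{K}_\Box$, of $\mathsf{K}_\Diamond$, or of an element of $\mathsf{Ax}$; (El) $\Gamma\vdash\varphi$ if $\varphi\in\Gamma$; (MP) from $\Gamma\vdash\varphi$ and $\Gamma\vdash\varphi\to\psi$ infer $\Gamma\vdash\psi$; (Nec) from $\emptyset\vdash\varphi$ infer $\Gamma\vdash\Box\varphi$. A formula is derivable in a logic if $\emptyset\vdash_{\mathsf{Ax}}\varphi$. *)

theory Defs
  imports Main
begin

datatype fm = Var nat | Bot | And fm fm | Or fm fm | Imp fm fm | Box fm | Dia fm

definition Neg :: "fm \<Rightarrow> fm" where "Neg \<phi> = Imp \<phi> Bot"

primrec subst :: "(nat \<Rightarrow> fm) \<Rightarrow> fm \<Rightarrow> fm" where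
  "subst \<sigma> (Var n) = \<sigma> n"
| "subst \<sigma> Bot = Bot"
| "subst \<sigma> (And a b) = And (subst \<sigma> a) (subst \<sigma> b)"
| "subst \<sigma> (Or a b) = Or (subst \<sigma> a) (subst \<sigma> b)"
| "subst \<sigma> (Imp a b) = Imp (subst \<sigma> a) (subst \<sigma> b)"
| "subst \<sigma> (Box a) = Box (subst \<sigma> a)"
| "subst \<sigma> (Dia a) = Dia (subst \<sigma> a)"

definition instances :: "fm set \<Rightarrow> fm set" where
  "instances A = {subst \<sigma> a | \<sigma> a. a \<in> A}"

abbreviation "pA \<equiv> Var 0"
abbreviation "pB \<equiv> Var 1"
abbreviation "pC \<equiv> Var 2"

definition IPC_axioms :: "fm set" where
  "IPC_axioms = {
     Imp pA (Imp pB pA),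
     Imp (Imp pA (Imp pB pC)) (Imp (Imp pA pB) (Imp pA pC)),
     Imp (And pA pB) pA,
     Imp (And pA pB) pB,
     Imp pA (Imp pB (And pA pB)),
     Imp pA (Or pA pB),
     Imp pB (Or pA pB),
     Imp (Imp pA pC) (Imp (Imp pB pC) (Imp (Or pA pB) pC)),
     Imp Bot pA }"

definition K_Box :: fm where "K_Box = Imp (Box (Imp pA pB)) (Imp (Box pA) (Box pB))"
definition K_Dia :: fm where "K_Dia = Imp (Box (Imp pA pB)) (Imp (Dia pA) (Dia pB))"
definition N_Dia :: fm where "N_Dia = Imp (Dia Bot) Bot"
definition N_DiaBox :: fm where "N_DiaBox = Imp (Dia Bot) (Box Bot)"
definition C_Dia :: fm where "C_Dia = Imp (Dia (Or pA pB)) (Or (Dia pA) (Dia pB))"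
definition I_DiaBox :: fm where "I_DiaBox = Imp (Imp (Dia pA) (Box pB)) (Box (Imp pA pB))"

text \<open>The consequence relation of CK \<oplus> Ax: deriv Ax Gamma phi.\<close>
inductive deriv :: "fm set \<Rightarrow> fm set \<Rightarrow> fm \<Rightarrow> bool" for Ax :: "fm set" where
  ax: "\<phi> \<in> instances (IPC_axioms \<union> {K_Box, K_Dia} \<union> Ax) \<Longrightarrow> deriv Ax \<Gamma> \<phi>"
| el: "\<phi> \<in> \<Gamma> \<Longrightarrow> deriv Ax \<Gamma> \<phi>"
| mp: "deriv Ax \<Gamma> \<phi> \<Longrightarrow> deriv Ax \<Gamma> (Imp \<phi> \<psi>) \<Longrightarrow> deriv Ax \<Gamma> \<psi>"
| nec: "deriv Ax {} \<phi> \<Longrightarrow> deriv Ax \<Gamma> (Box \<phi>)"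

definition derivable :: "fm set \<Rightarrow> fm \<Rightarrow> bool" where
  "derivable Ax \<phi> = deriv Ax {} \<phi>"

end

theory Submission
  imports Defs
begin

lemma weak: "deriv Ax \<Gamma> \<phi> \<Longrightarrow> \<Gamma> \<subseteq> \<Gamma>' \<Longrightarrow> deriv Ax \<Gamma>' \<phi>"
proof (induction arbitrary: \<Gamma>' rule: deriv.induct)
  case (ax \<phi> \<Gamma>) then show ?case by (simp add: deriv.ax)
next
  case (el \<phi> \<Gamma>) then show ?case by (auto intro: deriv.el)
next
  case (mp \<Gamma> \<phi> \<psi>) then show ?case by (meson deriv.mp)
next
  case (nec \<phi> \<Gamma>) then show ?case by (simp add: deriv.nec)
qed

definition sg :: "fm \<Rightarrow> fm \<Rightarrow> fm \<Rightarrow> nat \<Rightarrow> fm" where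
  "sg a b c = (\<lambda>n. if n = 0 then a else if n = 1 then b else c)"

lemma ax_inst: "x \<in> IPC_axioms \<union> {K_Box, K_Dia} \<union> Ax \<Longrightarrow> deriv Ax \<Gamma> (subst \<sigma> x)"
  by (rule deriv.ax) (auto simp: instances_def)

lemma ipc: "x \<in> IPC_axioms \<Longrightarrow> deriv Ax \<Gamma> (subst (sg a b c) x)"
  by (rule ax_inst) auto

lemma axK: "deriv Ax \<Gamma> (Imp a (Imp b a))"
  using ipc[of "Imp pA (Imp pB pA)" Ax \<Gamma> a b a] by (simp add: IPC_axioms_def sg_def)

lemma axS: "deriv Ax \<Gamma> (Imp (Imp a (Imp b c)) (Imp (Imp a b) (Imp a c)))"
  using ipc[of "Imp (Imp pA (Imp pB pC)) (Imp (Imp pA pB) (Imp pA pC))" Ax \<Gamma> a b c]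
  by (simp add: IPC_axioms_def sg_def)

lemma axBot: "deriv Ax \<Gamma> (Imp Bot a)"
  using ipc[of "Imp Bot pA" Ax \<Gamma> a a a] by (simp add: IPC_axioms_def sg_def)

lemma axKBox: "deriv Ax \<Gamma> (Imp (Box (Imp a b)) (Imp (Box a) (Box b)))"
  using ax_inst[of K_Box Ax \<Gamma> "sg a b b"] by (simp add: K_Box_def sg_def)

lemma axKDia: "deriv Ax \<Gamma> (Imp (Box (Imp a b)) (Imp (Dia a) (Dia b)))"
  using ax_inst[of K_Dia Ax \<Gamma> "sg a b b"] by (simp add: K_Dia_def sg_def)

lemma idt: "deriv Ax \<Gamma> (Imp a a)"
proof -
  have "deriv Ax \<Gamma> (Imp (Imp a (Imp (Imp a a) a)) (Imp (Imp a (Imp a a)) (Imp a a)))"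
    by (rule axS)
  then have "deriv Ax \<Gamma> (Imp (Imp a (Imp a a)) (Imp a a))" using axK deriv.mp by blast
  then show ?thesis using axK deriv.mp by blast
qed

lemma ded_aux: "deriv Ax \<Gamma>' \<psi> \<Longrightarrow> \<Gamma>' = insert \<phi> \<Gamma> \<Longrightarrow> deriv Ax \<Gamma> (Imp \<phi> \<psi>)"
proof (induction arbitrary: \<Gamma> rule: deriv.induct)
  case (ax \<psi> \<Gamma>')
  have "deriv Ax \<Gamma> \<psi>" by (rule deriv.ax) (rule ax.hyps)
  then show ?case by (rule deriv.mp[OF _ axK])
next
  case (el \<psi> \<Gamma>')
  show ?case
  proof (cases "\<psi> = \<phi>")
    case True then show ?thesis using idt by simp
  next
    case False then have "\<psi> \<in> \<Gamma>" using el by auto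
    then have "deriv Ax \<Gamma> \<psi>" by (rule deriv.el)
    then show ?thesis by (rule deriv.mp[OF _ axK])
  qed
next
  case (mp \<Gamma>' a b)
  have 1: "deriv Ax \<Gamma> (Imp \<phi> a)" by (rule mp.IH(1)[OF mp.prems])
  have 2: "deriv Ax \<Gamma> (Imp \<phi> (Imp a b))" by (rule mp.IH(2)[OF mp.prems])
  show ?case by (rule deriv.mp[OF 1 deriv.mp[OF 2 axS]])
next
  case (nec a \<Gamma>')
  have "deriv Ax \<Gamma> (Box a)" by (rule deriv.nec) (rule nec.hyps)
  then show ?case by (rule deriv.mp[OF _ axK])
qed

lemma ded: "deriv Ax (insert \<phi> \<Gamma>) \<psi> \<Longrightarrow> deriv Ax \<Gamma> (Imp \<phi> \<psi>)"
  using ded_aux by blast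

lemma part1: "derivable {N_Dia, I_DiaBox} (Imp (Neg (Neg (Box p))) (Box (Neg (Neg p))))"
proof -
  let ?A = "{N_Dia, I_DiaBox}"
  let ?X = "Box p" and ?Y = "Dia (Neg p)"
  have ndia: "deriv ?A \<Gamma> (Imp (Dia Bot) Bot)" for \<Gamma>
    using ax_inst[of N_Dia ?A \<Gamma> Var] by (simp add: N_Dia_def)
  have idb: "deriv ?A \<Gamma> (Imp (Imp (Dia (Neg p)) (Box Bot)) (Box (Imp (Neg p) Bot)))" for \<Gamma>
    using ax_inst[of I_DiaBox ?A \<Gamma> "sg (Neg p) Bot Bot"] by (simp add: I_DiaBox_def sg_def)
  have "deriv ?A {Neg p, p} Bot"
    by (rule deriv.mp[of _ _ p]) (auto intro: deriv.el simp: Neg_def)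
  then have "deriv ?A {} (Imp p (Imp (Neg p) Bot))" using ded by blast
  then have b1: "deriv ?A \<Gamma> (Box (Imp p (Neg (Neg p))))" for \<Gamma>
    by (simp add: Neg_def deriv.nec)
  let ?G = "{?Y, ?X}"
  have gX: "deriv ?A ?G ?X" by (rule deriv.el) simp
  have gY: "deriv ?A ?G ?Y" by (rule deriv.el) simp
  have "deriv ?A ?G (Imp (Box p) (Box (Neg (Neg p))))"
    by (rule deriv.mp[OF b1 axKBox])
  then have "deriv ?A ?G (Box (Neg (Neg p)))" by (rule deriv.mp[OF gX])
  then have "deriv ?A ?G (Imp ?Y (Dia Bot))"
    by (rule deriv.mp[OF _ axKDia[of ?A ?G "Neg p" Bot, folded Neg_def]])
  then have "deriv ?A ?G (Dia Bot)" by (rule deriv.mp[OF gY])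
  then have "deriv ?A ?G Bot" by (rule deriv.mp[OF _ ndia])
  then have "deriv ?A (insert ?X {?Y}) Bot" by (simp add: insert_commute)
  then have c1: "deriv ?A {?Y} (Neg ?X)" unfolding Neg_def by (rule ded)
  let ?H = "{?Y, Neg (Neg ?X)}"
  have "deriv ?A ?H (Neg ?X)" using weak[OF c1] by auto
  moreover have "deriv ?A ?H (Imp (Neg ?X) Bot)" by (rule deriv.el) (simp add: Neg_def)
  ultimately have "deriv ?A ?H Bot" by (rule deriv.mp)
  then have "deriv ?A ?H (Box Bot)" by (rule deriv.mp[OF _ axBot])
  then have "deriv ?A {Neg (Neg ?X)} (Imp ?Y (Box Bot))" by (rule ded)
  then have "deriv ?A {Neg (Neg ?X)} (Box (Imp (Neg p) Bot))"
    by (rule deriv.mp[OF _ idb])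
  then have "deriv ?A {Neg (Neg ?X)} (Box (Neg (Neg p)))" by (simp add: Neg_def)
  then show ?thesis unfolding derivable_def by (rule ded)
qed

datatype h = Z | A | B | C | T

lemma h_all: "(\<forall>x. P x) = (P Z \<and> P A \<and> P B \<and> P C \<and> P T)"
  by (metis h.exhaust)

fun meet :: "h \<Rightarrow> h \<Rightarrow> h" where
  "meet Z _ = Z" | "meet _ Z = Z" | "meet T y = y" | "meet x T = x"
| "meet C y = y" | "meet x C = x" | "meet A A = A" | "meet B B = B" | "meet _ _ = Z"

fun join :: "h \<Rightarrow> h \<Rightarrow> h" where
  "join Z y = y" | "join x Z = x" | "join T _ = T" | "join _ T = T"
| "join C _ = C" | "join _ C = C" | "join A A = A" | "join B B = B" | "join _ _ = C"

fun himp :: "h \<Rightarrow> h \<Rightarrow> h" where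
  "himp Z _ = T" | "himp _ T = T" | "himp T y = y"
| "himp C C = T" | "himp C y = y"
| "himp A A = T" | "himp A C = T" | "himp A _ = B"
| "himp B B = T" | "himp B C = T" | "himp B _ = A"

fun hbox :: "h \<Rightarrow> h" where "hbox T = T" | "hbox _ = C"
fun hdia :: "h \<Rightarrow> h" where "hdia Z = C" | "hdia _ = T"

primrec ev :: "(nat \<Rightarrow> h) \<Rightarrow> fm \<Rightarrow> h" where
  "ev v (Var n) = v n"
| "ev v Bot = Z"
| "ev v (And a b) = meet (ev v a) (ev v b)"
| "ev v (Or a b) = join (ev v a) (ev v b)"
| "ev v (Imp a b) = himp (ev v a) (ev v b)"
| "ev v (Box a) = hbox (ev v a)"
| "ev v (Dia a) = hdia (ev v a)"

lemma ev_subst: "ev v (subst \<sigma> a) = ev (\<lambda>n. ev v (\<sigma> n)) a"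
  by (induction a) auto

definition valid :: "fm \<Rightarrow> bool" where "valid a = (\<forall>v. ev v a = T)"

lemma ev3: "ev v a = T" if "\<And>x y z. x = v 0 \<Longrightarrow> y = v 1 \<Longrightarrow> z = v 2 \<Longrightarrow> ev v a = T"
  using that by blast


lemma ax_valid:
  assumes "x \<in> IPC_axioms \<union> {K_Box, K_Dia} \<union> {N_DiaBox, C_Dia, I_DiaBox}"
  shows "ev v x = T"
  using assms unfolding IPC_axioms_def K_Box_def K_Dia_def N_DiaBox_def C_Dia_def I_DiaBox_def
  apply (simp only: Un_iff insert_iff empty_iff)
  apply (elim disjE)
                apply (simp_all)
                apply (cases "v 0"; cases "v (Suc 0)"; cases "v 2"; simp)+
  done

lemma sound:
  "deriv Ax \<Gamma> \<phi> \<Longrightarrow> Ax \<subseteq> {N_DiaBox, C_Dia, I_DiaBox} \<Longrightarrow> (\<forall>\<psi>\<in>\<Gamma>. ev v \<psi> = T) \<Longrightarrow> ev v \<phi> = T"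
proof (induction arbitrary: v rule: deriv.induct)
  case (ax \<phi> \<Gamma>)
  then obtain \<sigma> a where a: "\<phi> = subst \<sigma> a" "a \<in> IPC_axioms \<union> {K_Box, K_Dia} \<union> Ax"
    by (auto simp: instances_def)
  then have "a \<in> IPC_axioms \<union> {K_Box, K_Dia} \<union> {N_DiaBox, C_Dia, I_DiaBox}" using ax by blast
  then show ?case using a by (simp add: ev_subst ax_valid)
next
  case (el \<phi> \<Gamma>) then show ?case by auto
next
  case (mp \<Gamma> \<phi> \<psi>)
  have 1: "ev v \<phi> = T" using mp by blast
  have 2: "himp (ev v \<phi>) (ev v \<psi>) = T" using mp by force
  show ?case using 2 unfolding 1 by (cases "ev v \<psi>") auto
next
  case (nec \<phi> \<Gamma>)
  then have "ev v \<phi> = T" by simp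
  then show ?case by simp
qed

theorem mainTheorem16:
  fixes p :: fm
  assumes "\<exists>n. p = Var n"
  shows "derivable {N_Dia, I_DiaBox} (Imp (Neg (Neg (Box p))) (Box (Neg (Neg p))))
       \<and> \<not> derivable {N_DiaBox, C_Dia, I_DiaBox} (Imp (Neg (Neg (Box p))) (Box (Neg (Neg p))))
       \<and> \<not> derivable {N_DiaBox, I_DiaBox} (Imp (Neg (Neg (Box p))) (Box (Neg (Neg p))))"
proof -
  obtain n where n: "p = Var n" using assms by blast
  have ce: "ev (\<lambda>_. Z) (Imp (Neg (Neg (Box p))) (Box (Neg (Neg p)))) \<noteq> T"
    by (simp add: n Neg_def)
  have "\<not> derivable Ax (Imp (Neg (Neg (Box p))) (Box (Neg (Neg p))))"
    if "Ax \<subseteq> {N_DiaBox, C_Dia, I_DiaBox}" for Ax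
  proof
    assume "derivable Ax (Imp (Neg (Neg (Box p))) (Box (Neg (Neg p))))"
    then have "ev (\<lambda>_. Z) (Imp (Neg (Neg (Box p))) (Box (Neg (Neg p)))) = T"
      using sound[OF _ that, of "{}"] unfolding derivable_def by blast
    with ce show False by contradiction
  qed
  then show ?thesis using part1 by auto
qed

end
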